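(* Let $\alpha\in(0,1]$, $\Theta\in[0,1]$, $\delta_t>0$ and $Q>0$ be given, and define the matrices $$A=\begin{bmatrix}1&0\\ \alpha&0\end{bmatrix},\quad B=-D=\begin{bmatrix}\delta_t&-\delta_t&0&0&0\\ 0&0&\delta_t&-\delta_t&0\end{bmatrix},\quad C=\begin{bmatrix}0&1\end{bmatrix},\quad E=\begin{bmatrix}0&0&0&0&1\end{bmatrix}.$$ Consider the ramp queue system $$x(t+1)=(A+\Delta A(t))x(t)+B\tilde f(t)+Dw(t),\qquad y(t)=Cx(t)+Ew(t),\qquad t=0,1,2,\dots,$$ where $x(t)\in[0,Q]^2$, $\tilde f(t)\in\mathbb{R}^4$ is a known input, $w(t)\in\mathbb{R}^5$ is an unknown noise, and $\Delta A(t)=\begin{bmatrix}0&0\\ \theta(t)&0\end{bmatrix}$ with $\theta(t)$ unknown and $\sup_{t\ge0}|\theta(t)|\le\Theta$. Consider the filter $$\hat x(t+1)=A\hat x(t)+B\tilde f(t)+L\big(y(t)-\hat y(t)\big),\qquad \hat y(t)=C\hat x(t),$$ with initial condition $\hat x(0)\in[0,Q]^2$ and gain $L\in\mathbb{R}^{2\times 1}$, and let $e(t)=x(t)-\hat x(t)$. Suppose there exist a symmetric positive definite matrix $P\in\mathbb{R}^{2\times2}$, a vector $R\in\mathbb{R}^{2}$ and scalars $\mu_1,\mu_2,\mu_3>0$ such that $$\begin{bmatrix} -\mu_3 I & \Theta P & 0 & 0 & 0\\ \Theta P & -P & PA-RC & 0 & PD-RE\\ 0 & (PA-RC)^{\mathrm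 T} & -P+I & 0 & 0\\ 0 & 0 & 0 & (\mu_3-\mu_1)I & 0\\ 0 & (PD-RE)^{\mathrm T} & 0 & 0 & -\mu_2 I \end{bmatrix}\prec 0,$$ where the first four diagonal blocks are $2\times 2$ and the last is $5\times5$. Then, with the filter gain $L=P^{-1}R$, there exists a positive definite function $\gamma$ of $(x(0),\hat x(0))\in[0,Q]^2\times[0,Q]^2$ with values in $\mathbb{R}_{\ge0}$ such that $$\sum_{t=0}^T\|e(t)\|_2^2\le \mu_1\sum_{t=0}^T\|x(t)\|_2^2+\mu_2\sum_{t=0}^T\|w(t)\|_2^2+\gamma(x(0),\hat x(0)),\qquad T=0,1,2,\dots,$$ for any initial conditions $x(0),\hat x(0)\in[0,Q]^2$, any input $\tilde f$, any noise $w$ and any uncertainty $\theta$ with $\sup_{t\ge0}|\theta(t)|\le\Theta$.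
   Context: Model interpretation: $x(t)=(x_{\mathrm{all}}(t),x_{\mathrm{cv}}(t))^{\mathrm T}$ is the number of all vehicles and of connected vehicles queued on a freeway on-ramp (bounded by the maximum queue length $Q$), $\alpha+\theta(t)$ is the connected-vehicle penetration rate, $\delta_t$ is the metering cycle length, $\tilde f(t)$ are measured in/out flows, and $y(t)$ is the measured connected-vehicle count. $\|\cdot\|_2$ is the Euclidean norm; $X\prec0$ means $X$ is symmetric negative definite; $I$ denotes an identity matrix of the appropriate size. *)

theory Defs
  imports "HOL-Analysis.Analysis"
begin

definition neg_def_mat :: "real^'n^'n \<Rightarrow> bool" where
  "neg_def_mat X \<longleftrightarrow> transpose X = X \<and> (\<forall>z. z \<noteq> 0 \<longrightarrow> z \<bullet> (X *v z) < 0)"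

definition pos_def_mat :: "real^'n^'n \<Rightarrow> bool" where
  "pos_def_mat X \<longleftrightarrow> transpose X = X \<and> (\<forall>z. z \<noteq> 0 \<longrightarrow> z \<bullet> (X *v z) > 0)"

type_synonym blk = "2 + (2 + (2 + (2 + 5)))"

definition block5 ::
  "(real^2^2) \<Rightarrow> (real^2^2) \<Rightarrow> (real^2^2) \<Rightarrow> (real^2^2) \<Rightarrow> (real^5^2) \<Rightarrow>
   (real^2^2) \<Rightarrow> (real^2^2) \<Rightarrow> (real^2^2) \<Rightarrow> (real^2^2) \<Rightarrow> (real^5^2) \<Rightarrow>
   (real^2^2) \<Rightarrow> (real^2^2) \<Rightarrow> (real^2^2) \<Rightarrow> (real^2^2) \<Rightarrow> (real^5^2) \<Rightarrow>
   (real^2^2) \<Rightarrow> (real^2^2) \<Rightarrow> (real^2^2) \<Rightarrow> (real^2^2) \<Rightarrow> (real^5^2) \<Rightarrow>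
   (real^2^5) \<Rightarrow> (real^2^5) \<Rightarrow> (real^2^5) \<Rightarrow> (real^2^5) \<Rightarrow> (real^5^5) \<Rightarrow> real^blk^blk"
  where
  "block5 M11 M12 M13 M14 M15 M21 M22 M23 M24 M25 M31 M32 M33 M34 M35
          M41 M42 M43 M44 M45 M51 M52 M53 M54 M55 =
   (\<chi> i j.
     (case i of
        Inl a \<Rightarrow> (case j of Inl b \<Rightarrow> M11$a$b | Inr (Inl b) \<Rightarrow> M12$a$b
                   | Inr (Inr (Inl b)) \<Rightarrow> M13$a$b | Inr (Inr (Inr (Inl b))) \<Rightarrow> M14$a$b
                   | Inr (Inr (Inr (Inr b))) \<Rightarrow> M15$a$b)
      | Inr (Inl a) \<Rightarrow> (case j of Inl b \<Rightarrow> M21$a$b | Inr (Inl b) \<Rightarrow> M22$a$b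
                   | Inr (Inr (Inl b)) \<Rightarrow> M23$a$b | Inr (Inr (Inr (Inl b))) \<Rightarrow> M24$a$b
                   | Inr (Inr (Inr (Inr b))) \<Rightarrow> M25$a$b)
      | Inr (Inr (Inl a)) \<Rightarrow> (case j of Inl b \<Rightarrow> M31$a$b | Inr (Inl b) \<Rightarrow> M32$a$b
                   | Inr (Inr (Inl b)) \<Rightarrow> M33$a$b | Inr (Inr (Inr (Inl b))) \<Rightarrow> M34$a$b
                   | Inr (Inr (Inr (Inr b))) \<Rightarrow> M35$a$b)
      | Inr (Inr (Inr (Inl a))) \<Rightarrow> (case j of Inl b \<Rightarrow> M41$a$b | Inr (Inl b) \<Rightarrow> M42$a$b
                   | Inr (Inr (Inl b)) \<Rightarrow> M43$a$b | Inr (Inr (Inr (Inl b))) \<Rightarrow> M44$a$b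
                   | Inr (Inr (Inr (Inr b))) \<Rightarrow> M45$a$b)
      | Inr (Inr (Inr (Inr a))) \<Rightarrow> (case j of Inl b \<Rightarrow> M51$a$b | Inr (Inl b) \<Rightarrow> M52$a$b
                   | Inr (Inr (Inl b)) \<Rightarrow> M53$a$b | Inr (Inr (Inr (Inl b))) \<Rightarrow> M54$a$b
                   | Inr (Inr (Inr (Inr b))) \<Rightarrow> M55$a$b)))"

definition Amat :: "real \<Rightarrow> real^2^2" where
  "Amat \<alpha> = vector [vector [1, 0], vector [\<alpha>, 0]]"

definition Bmat :: "real \<Rightarrow> real^4^2" where
  "Bmat dt = vector [vector [dt, -dt, 0, 0], vector [0, 0, dt, -dt]]"

definition Dmat :: "real \<Rightarrow> real^5^2" where
  "Dmat dt = vector [vector [-dt, dt, 0, 0, 0], vector [0, 0, -dt, dt, 0]]"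

definition Cmat :: "real^2^1" where
  "Cmat = vector [vector [0, 1]]"

definition Emat :: "real^5^1" where
  "Emat = vector [vector [0, 0, 0, 0, 1]]"

definition DeltaA :: "real \<Rightarrow> real^2^2" where
  "DeltaA th = vector [vector [0, 0], vector [th, 0]]"

definition box2 :: "real \<Rightarrow> (real^2) set" where
  "box2 Q = {z. \<forall>i. 0 \<le> z$i \<and> z$i \<le> Q}"

end

theory Submission
  imports Defs
begin

lemma sum_UNIV_plus: "sum f (UNIV :: ('a::finite + 'b::finite) set) = sum (\<lambda>k. f (Inl k)) UNIV + sum (\<lambda>k. f (Inr k)) UNIV"
  using sum.Plus[of "UNIV::'a set" "UNIV::'b set" f] by (simp add: comp_def)

definition mkz :: "real^2 \<Rightarrow> real^2 \<Rightarrow> real^2 \<Rightarrow> real^2 \<Rightarrow> real^5 \<Rightarrow> real^blk" where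
  "mkz a b c d g = (\<chi> i. case i of Inl k \<Rightarrow> a$k | Inr (Inl k) \<Rightarrow> b$k | Inr (Inr (Inl k)) \<Rightarrow> c$k
     | Inr (Inr (Inr (Inl k))) \<Rightarrow> d$k | Inr (Inr (Inr (Inr k))) \<Rightarrow> g$k)"

lemma inner_mkz:
  "mkz a b c d g \<bullet> mkz a' b' c' d' g' = a \<bullet> a' + b \<bullet> b' + c \<bullet> c' + d \<bullet> d' + g \<bullet> g'"
  unfolding inner_vec_def mkz_def by (simp add: sum_UNIV_plus add.assoc)

lemma mv_block5:
  "block5 M11 M12 M13 M14 M15 M21 M22 M23 M24 M25 M31 M32 M33 M34 M35
          M41 M42 M43 M44 M45 M51 M52 M53 M54 M55 *v mkz a b c d g =
   mkz (M11 *v a + M12 *v b + M13 *v c + M14 *v d + M15 *v g)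
       (M21 *v a + M22 *v b + M23 *v c + M24 *v d + M25 *v g)
       (M31 *v a + M32 *v b + M33 *v c + M34 *v d + M35 *v g)
       (M41 *v a + M42 *v b + M43 *v c + M44 *v d + M45 *v g)
       (M51 *v a + M52 *v b + M53 *v c + M54 *v d + M55 *v g)"
  unfolding vec_eq_iff split_sum_all
  by (simp add: matrix_vector_mult_def block5_def mkz_def sum_UNIV_plus add.assoc)

lemma quad_block5:
  "mkz a b c d g \<bullet> (block5 M11 M12 M13 M14 M15 M21 M22 M23 M24 M25 M31 M32 M33 M34 M35
          M41 M42 M43 M44 M45 M51 M52 M53 M54 M55 *v mkz a b c d g) =
   a \<bullet> (M11 *v a) + a \<bullet> (M12 *v b) + a \<bullet> (M13 *v c) + a \<bullet> (M14 *v d) + a \<bullet> (M15 *v g) +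
   b \<bullet> (M21 *v a) + b \<bullet> (M22 *v b) + b \<bullet> (M23 *v c) + b \<bullet> (M24 *v d) + b \<bullet> (M25 *v g) +
   c \<bullet> (M31 *v a) + c \<bullet> (M32 *v b) + c \<bullet> (M33 *v c) + c \<bullet> (M34 *v d) + c \<bullet> (M35 *v g) +
   d \<bullet> (M41 *v a) + d \<bullet> (M42 *v b) + d \<bullet> (M43 *v c) + d \<bullet> (M44 *v d) + d \<bullet> (M45 *v g) +
   g \<bullet> (M51 *v a) + g \<bullet> (M52 *v b) + g \<bullet> (M53 *v c) + g \<bullet> (M54 *v d) + g \<bullet> (M55 *v g)"
  unfolding mv_block5 inner_mkz inner_add_right by (simp only: add.assoc)

lemma scaleR_mat_mult: "((c::real) *\<^sub>R (M::real^'n^'m)) *v v = c *\<^sub>R (M *v v)"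
  by (simp add: vec_eq_iff matrix_vector_mult_def sum_distrib_left mult.assoc vector_scaleR_component)

lemma neg_mat_mult: "(- (M::real^'n^'m)) *v v = - (M *v v)"
  by (simp add: vec_eq_iff matrix_vector_mult_def sum_negf)

lemma inner_transpose: "(u::real^'n) \<bullet> (transpose K *v v) = (K *v u) \<bullet> v"
proof -
  have "transpose K *v v = v v* K" by (metis vector_transpose_matrix transpose_transpose)
  then show ?thesis by (metis dot_lmul_matrix inner_commute)
qed

lemma inner_sym:
  assumes "transpose P = (P::real^'n^'n)"
  shows "u \<bullet> (P *v v) = v \<bullet> (P *v u)"
  using inner_transpose[of u P v] assms by (simp add: inner_commute)

lemma psd:
  assumes "pos_def_mat P" shows "0 \<le> z \<bullet> (P *v z)"
  using assms unfolding pos_def_mat_def by (cases "z = 0") (auto intro: less_imp_le)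

lemma nsd:
  assumes "neg_def_mat M" shows "z \<bullet> (M *v z) \<le> 0"
  using assms unfolding neg_def_mat_def by (cases "z = 0") (auto intro: less_imp_le)

lemma pinv:
  assumes "pos_def_mat (P::real^'n^'n)"
  shows "P ** matrix_inv P = mat 1"
proof -
  have "inj ((*v) P)"
  proof (rule injI)
    fix u v assume "P *v u = P *v v"
    then have "P *v (u - v) = 0" by (simp add: matrix_vector_mult_diff_distrib)
    then have "(u - v) \<bullet> (P *v (u - v)) = 0" by simp
    then have "u - v = 0" using assms unfolding pos_def_mat_def by (metis less_irrefl)
    then show "u = v" by simp
  qed
  then obtain B where "B ** P = mat 1" using matrix_left_invertible_injective by blast
  then have "invertible P" using invertible_left_inverse by blast
  then have "\<exists>A'. P ** A' = mat 1 \<and> A' ** P = mat 1" unfolding invertible_def .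
  then show ?thesis unfolding matrix_inv_def by (rule someI_ex[THEN conjunct1])
qed

lemma deltaA_comp: "(DeltaA th *v x) $ 1 = 0" "(DeltaA th *v x) $ 2 = th * x $ 1"
  by (simp_all add: DeltaA_def matrix_vector_mult_def sum_2)

lemma inner2: "(u::real^2) \<bullet> u = (u$1)^2 + (u$2)^2"
  by (simp add: inner_vec_def sum_2 power2_eq_square)

lemma step:
  fixes \<alpha> \<Theta> dt \<mu>1 \<mu>2 \<mu>3 th :: real
    and P :: "real^2^2" and R :: "real^1^2"
    and x xh x' xh' :: "real^2" and y :: "real^1" and f :: "real^4" and w :: "real^5"
  assumes "0 \<le> \<Theta>" "pos_def_mat P" "0 < \<mu>3"
    and ND: "neg_def_mat (block5
          (-\<mu>3 *\<^sub>R mat 1) (\<Theta> *\<^sub>R P) 0 0 0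
          (\<Theta> *\<^sub>R P) (-P) (P ** Amat \<alpha> - R ** Cmat) 0 (P ** Dmat dt - R ** Emat)
          0 (transpose (P ** Amat \<alpha> - R ** Cmat)) (-P + mat 1) 0 0
          0 0 0 ((\<mu>3 - \<mu>1) *\<^sub>R mat 1) 0
          0 (transpose (P ** Dmat dt - R ** Emat)) 0 0 (-\<mu>2 *\<^sub>R mat 1))"
    and th: "\<bar>th\<bar> \<le> \<Theta>"
    and hx: "x' = (Amat \<alpha> + DeltaA th) *v x + Bmat dt *v f + Dmat dt *v w"
    and hy: "y = Cmat *v x + Emat *v w"
    and hxh: "xh' = Amat \<alpha> *v xh + Bmat dt *v f + (matrix_inv P ** R) *v (y - Cmat *v xh)"
  shows "(x' - xh') \<bullet> (P *v (x' - xh')) - (x - xh) \<bullet> (P *v (x - xh)) + (x - xh) \<bullet> (x - xh)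
         \<le> \<mu>1 * (x \<bullet> x) + \<mu>2 * (w \<bullet> w)"
proof -
  define e where "e = x - xh"
  define e' where "e' = x' - xh'"
  define K where "K = P ** Amat \<alpha> - R ** Cmat"
  define G where "G = P ** Dmat dt - R ** Emat"
  define dx where "dx = DeltaA th *v x"
  have sym: "transpose P = P" using assms(2) unfolding pos_def_mat_def by blast
  have PL: "P *v (matrix_inv P *v u) = u" for u
    using pinv[OF assms(2)] by (simp add: matrix_vector_mul_assoc)
  have Pe': "P *v e' = K *v e + G *v w + P *v dx"
    unfolding e'_def e_def K_def G_def dx_def hx hxh hy
    apply (simp only: matrix_vector_mult_add_rdistrib matrix_vector_mult_diff_rdistrib
      matrix_vector_right_distrib matrix_vector_mult_diff_distrib matrix_vector_mul_assoc[symmetric] PL)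
    by (simp add: algebra_simps)
  define a where "a = (if \<Theta> = 0 then 0 else (1 / \<Theta>) *\<^sub>R dx)"
  have dx0: "\<Theta> = 0 \<Longrightarrow> dx = 0"
    using th by (simp add: dx_def vec_eq_iff forall_2 deltaA_comp)
  have Ta: "\<Theta> *\<^sub>R a = dx"
    using dx0 by (simp add: a_def)
  have aa: "a \<bullet> a \<le> x \<bullet> x"
  proof (cases "\<Theta> = 0")
    case True then show ?thesis by (simp add: a_def)
  next
    case False
    have "a \<bullet> a = (th / \<Theta>)^2 * (x$1)^2"
      using False by (simp add: a_def inner2 dx_def deltaA_comp power2_eq_square)
    also have "\<dots> \<le> 1 * (x$1)^2"
    proof (rule mult_right_mono)
      have Tp: "0 < \<Theta>" using False assms(1) by simp
      have "\<bar>th\<bar> / \<Theta> \<le> 1" using th Tp by simp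
      then have "\<bar>th / \<Theta>\<bar> \<le> 1" using Tp by (simp add: abs_divide)
      then have "\<bar>th / \<Theta>\<bar>^2 \<le> 1" by (rule power_le_one[OF abs_ge_zero])
      then show "(th / \<Theta>)^2 \<le> 1" by (simp only: power2_abs)
    qed simp
    also have "\<dots> \<le> x \<bullet> x" by (simp add: inner2)
    finally show ?thesis .
  qed
  have Q: "mkz a e' e x w \<bullet> (block5
          (-\<mu>3 *\<^sub>R mat 1) (\<Theta> *\<^sub>R P) 0 0 0
          (\<Theta> *\<^sub>R P) (-P) K 0 G
          0 (transpose K) (-P + mat 1) 0 0
          0 0 0 ((\<mu>3 - \<mu>1) *\<^sub>R mat 1) 0
          0 (transpose G) 0 0 (-\<mu>2 *\<^sub>R mat 1) *v mkz a e' e x w) \<le> 0"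
    using nsd[OF ND[folded K_def G_def]] .
  have Q2: "- \<mu>3 * (a \<bullet> a) + \<Theta> * (a \<bullet> (P *v e')) + \<Theta> * (e' \<bullet> (P *v a)) - e' \<bullet> (P *v e')
     + e' \<bullet> (K *v e) + e' \<bullet> (G *v w) + (K *v e) \<bullet> e' - e \<bullet> (P *v e) + e \<bullet> e
     + (\<mu>3 - \<mu>1) * (x \<bullet> x) + (G *v w) \<bullet> e' - \<mu>2 * (w \<bullet> w) \<le> 0"
    using Q by (simp only: quad_block5 scaleR_mat_mult matrix_vector_mul_lid matrix_vector_mult_0
        inner_zero_right neg_mat_mult inner_minus_right inner_transpose matrix_vector_mult_add_rdistrib
        inner_add_right inner_scaleR_right add_0_right add_0_left)
  have s1: "e' \<bullet> (P *v a) = a \<bullet> (P *v e')" using inner_sym[OF sym] .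
  have s2: "e' \<bullet> (P *v e') = e' \<bullet> (K *v e) + e' \<bullet> (G *v w) + \<Theta> * (e' \<bullet> (P *v a))"
  proof -
    have "e' \<bullet> (P *v e') = e' \<bullet> (K *v e + G *v w + P *v dx)" by (simp only: Pe')
    also have "\<dots> = e' \<bullet> (K *v e) + e' \<bullet> (G *v w) + e' \<bullet> (P *v dx)"
      by (simp only: inner_add_right)
    also have "e' \<bullet> (P *v dx) = \<Theta> * (e' \<bullet> (P *v a))"
      by (simp only: Ta[symmetric] matrix_vector_mult_scaleR inner_scaleR_right)
    finally show ?thesis .
  qed
  have s3: "\<mu>3 * (a \<bullet> a) \<le> \<mu>3 * (x \<bullet> x)" using aa assms(3) by simp
  have "e' \<bullet> (P *v e') - e \<bullet> (P *v e) + e \<bullet> e \<le> \<mu>1 * (x \<bullet> x) + \<mu>2 * (w \<bullet> w)"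
  proof -
    have c1: "(K *v e) \<bullet> e' = e' \<bullet> (K *v e)" by (rule inner_commute)
    have c2: "(G *v w) \<bullet> e' = e' \<bullet> (G *v w)" by (rule inner_commute)
    have c3: "\<Theta> * (e' \<bullet> (P *v a)) = \<Theta> * (a \<bullet> (P *v e'))" using s1 by simp
    have c4: "(\<mu>3 - \<mu>1) * (x \<bullet> x) = \<mu>3 * (x \<bullet> x) - \<mu>1 * (x \<bullet> x)"
      by (simp only: left_diff_distrib)
    show ?thesis using Q2 s2 s3 c1 c2 c3 c4 by linarith
  qed
  then show ?thesis unfolding e_def e'_def .
qed


theorem theorem1:
  fixes \<alpha> \<Theta> dt Q \<mu>1 \<mu>2 \<mu>3 :: real
    and P :: "real^2^2" and R :: "real^1^2"
  assumes "0 < \<alpha>" "\<alpha> \<le> 1" "0 \<le> \<Theta>" "\<Theta> \<le> 1" "0 < dt" "0 < Q"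
    and "pos_def_mat P"
    and "0 < \<mu>1" "0 < \<mu>2" "0 < \<mu>3"
    and "neg_def_mat (block5
          (-\<mu>3 *\<^sub>R mat 1) (\<Theta> *\<^sub>R P) 0 0 0
          (\<Theta> *\<^sub>R P) (-P) (P ** Amat \<alpha> - R ** Cmat) 0 (P ** Dmat dt - R ** Emat)
          0 (transpose (P ** Amat \<alpha> - R ** Cmat)) (-P + mat 1) 0 0
          0 0 0 ((\<mu>3 - \<mu>1) *\<^sub>R mat 1) 0
          0 (transpose (P ** Dmat dt - R ** Emat)) 0 0 (-\<mu>2 *\<^sub>R mat 1))"
  shows "\<exists>\<gamma> :: real^2 \<Rightarrow> real^2 \<Rightarrow> real.
     \<gamma> 0 0 = 0 \<and>
     (\<forall>x0 \<in> box2 Q. \<forall>xh0 \<in> box2 Q. \<gamma> x0 xh0 \<ge> 0 \<and> ((x0, xh0) \<noteq> (0, 0) \<longrightarrow> \<gamma> x0 xh0 > 0)) \<and>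
     (\<forall>(x :: nat \<Rightarrow> real^2) (xh :: nat \<Rightarrow> real^2) (y :: nat \<Rightarrow> real^1)
        (f :: nat \<Rightarrow> real^4) (w :: nat \<Rightarrow> real^5) (\<theta> :: nat \<Rightarrow> real).
        (\<forall>t. x t \<in> box2 Q) \<longrightarrow> xh 0 \<in> box2 Q \<longrightarrow> (\<forall>t. \<bar>\<theta> t\<bar> \<le> \<Theta>) \<longrightarrow>
        (\<forall>t. x (Suc t) = (Amat \<alpha> + DeltaA (\<theta> t)) *v x t + Bmat dt *v f t + Dmat dt *v w t) \<longrightarrow>
        (\<forall>t. y t = Cmat *v x t + Emat *v w t) \<longrightarrow>
        (\<forall>t. xh (Suc t) = Amat \<alpha> *v xh t + Bmat dt *v f t
                + (matrix_inv P ** R) *v (y t - Cmat *v xh t)) \<longrightarrow>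
        (\<forall>T. (\<Sum>t\<le>T. (norm (x t - xh t))\<^sup>2)
              \<le> \<mu>1 * (\<Sum>t\<le>T. (norm (x t))\<^sup>2) + \<mu>2 * (\<Sum>t\<le>T. (norm (w t))\<^sup>2)
                + \<gamma> (x 0) (xh 0)))"
  proof -
  define V where "V = (\<lambda>v::real^2. v \<bullet> (P *v v))"
  have V0: "\<And>v. 0 \<le> V v" unfolding V_def using psd[OF assms(7)] .
  define \<gamma> where "\<gamma> = (\<lambda>x0 xh0 :: real^2. V (x0 - xh0) + x0 \<bullet> x0 + xh0 \<bullet> xh0)"
  have g0: "\<gamma> 0 0 = 0" by (simp add: \<gamma>_def V_def)
  have gpos: "\<forall>x0 \<in> box2 Q. \<forall>xh0 \<in> box2 Q. \<gamma> x0 xh0 \<ge> 0 \<and> ((x0, xh0) \<noteq> (0, 0) \<longrightarrow> \<gamma> x0 xh0 > 0)"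
  proof (intro ballI conjI impI)
    fix x0 xh0 :: "real^2"
    show "0 \<le> \<gamma> x0 xh0" unfolding \<gamma>_def using V0[of "x0 - xh0"] by simp
    assume "(x0, xh0) \<noteq> (0, 0)"
    then have "0 < x0 \<bullet> x0 + xh0 \<bullet> xh0"
    proof (cases "x0 = 0")
      case True
      then have "xh0 \<noteq> 0" using \<open>(x0, xh0) \<noteq> (0, 0)\<close> by simp
      then have "0 < xh0 \<bullet> xh0" by simp
      then show ?thesis using True by simp
    next
      case False
      then have "0 < x0 \<bullet> x0" by simp
      moreover have "0 \<le> xh0 \<bullet> xh0" by simp
      ultimately show ?thesis by linarith
    qed
    then show "0 < \<gamma> x0 xh0" unfolding \<gamma>_def using V0[of "x0 - xh0"] by simp
  qed
  show ?thesis
  proof (intro exI[of _ \<gamma>] conjI g0 gpos allI impI)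
    fix x xh :: "nat \<Rightarrow> real^2" and y :: "nat \<Rightarrow> real^1" and f :: "nat \<Rightarrow> real^4"
      and w :: "nat \<Rightarrow> real^5" and \<theta> :: "nat \<Rightarrow> real" and T :: nat
    assume hth: "\<forall>t. \<bar>\<theta> t\<bar> \<le> \<Theta>"
      and hx: "\<forall>t. x (Suc t) = (Amat \<alpha> + DeltaA (\<theta> t)) *v x t + Bmat dt *v f t + Dmat dt *v w t"
      and hy: "\<forall>t. y t = Cmat *v x t + Emat *v w t"
      and hxh: "\<forall>t. xh (Suc t) = Amat \<alpha> *v xh t + Bmat dt *v f t
                + (matrix_inv P ** R) *v (y t - Cmat *v xh t)"
    have st: "V (x (Suc t) - xh (Suc t)) - V (x t - xh t) + (x t - xh t) \<bullet> (x t - xh t)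
         \<le> \<mu>1 * (x t \<bullet> x t) + \<mu>2 * (w t \<bullet> w t)" for t
      unfolding V_def
      by (rule step[OF assms(3) assms(7) assms(10) assms(11) hth[rule_format] hx[rule_format]
            hy[rule_format] hxh[rule_format]])
    have ind: "(\<Sum>t\<le>T. (x t - xh t) \<bullet> (x t - xh t)) + V (x (Suc T) - xh (Suc T))
        \<le> \<mu>1 * (\<Sum>t\<le>T. x t \<bullet> x t) + \<mu>2 * (\<Sum>t\<le>T. w t \<bullet> w t) + V (x 0 - xh 0)" for T
    proof (induction T)
      case 0 then show ?case using st[of 0] by simp
    next
      case (Suc T) then show ?case using st[of "Suc T"] by (simp add: distrib_left)
    qed
    have "\<gamma> (x 0) (xh 0) \<ge> V (x 0 - xh 0)" unfolding \<gamma>_def by simp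
    then show "(\<Sum>t\<le>T. (norm (x t - xh t))\<^sup>2)
              \<le> \<mu>1 * (\<Sum>t\<le>T. (norm (x t))\<^sup>2) + \<mu>2 * (\<Sum>t\<le>T. (norm (w t))\<^sup>2)
                + \<gamma> (x 0) (xh 0)"
      using ind[of T] V0[of "x (Suc T) - xh (Suc T)"] by (simp add: power2_norm_eq_inner)
  qed
qed

end
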